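(* In the setting described in the context, let $v\in\operatorname{Lip}_1(X_h)$ and $\lambda\in\mathbb{R}$ satisfy $\hat F_h^+v=\lambda+v$. Then $\lambda-h\le\rho\le\lambda$, where $\rho$ is the value of the escape rate game played on $\operatorname{Int}C$ with the maps $T_{ab}$.
   Context: Let $C\subset\mathbb{R}^n$ be a pointed closed convex cone, $C^*$ its dual cone, $e^*\in\operatorname{int}C^*$, and $\Delta=\{x\in C:\langle x,e^*\rangle=1\}$. $x\le_C y$ means $y-x\in C$; $\operatorname{Funk}(x,y)=\log\inf\{\lambda>0:x\le_C\lambda y\}$ on $\operatorname{Int}C$; $\operatorname{Hil}(x,y)=\operatorname{Funk}(x,y)+\operatorname{Funk}(y,x)$. Let $\mathcal{A},\mathcal{B}$ be nonempty compact action sets and $(T_{ab})_{(a,b)\in\mathcal{A}\times\mathcal{B}}$ self-maps of $\operatorname{Int}C$ nonexpansive for $\operatorname{Funk}$ (i.e. $\operatorname{Funk}(T_{ab}x,T_{ab}y)\le\operatorname{Funk}(x,y)$), such that for each $x$ the maps $a\mapsto T_{ab}(x)$, $b\mapsto T_{ab}(x)$ are continuous, for each compact $K$ the set $\{T_{ab}(x):(a,b,x)\in\mathcal{A}\times\mathcal{B}\times K\}$ is compact, and each $T_{ab}$ extends continuously (Euclidean topology) to $C$. Small cone assumption: there is a closed cone $K\subset C$ with $T_{ab}(K)\subset K$ for all $a,b$ and $X:=K\cap\Delta\subset\operatorname{relint}\Delta$. For $h>0$, $X_h\subset X$ is a finite set with $X\subset\bigcup_{y\in X_h}\{x:\operatorname{Hil}(x,y)<h\}$.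 $\operatorname{Lip}_1(Y)$ is the set of $f:Y\to\mathbb{R}$ with $f(x)-f(y)\le\operatorname{Funk}(x,y)$ for $x,y\in Y$. $F$ maps $v\in\operatorname{Lip}_1(X)$ to $Fv(x)=\inf_{a\in\mathcal{A}}\sup_{b\in\mathcal{B}}\big[\log\langle T_{ab}(x),e^*\rangle+v\big(T_{ab}(x)/\langle T_{ab}(x),e^*\rangle\big)\big]$; $I_h^+v(x)=\min_{y\in X_h}[v(y)+\operatorname{Funk}(x,y)]$ for $v\in\mathbb{R}^{X_h}$, $x\in X$; $R_h$ is restriction to $X_h$; $\hat F_h^+=R_hFI_h^+$. Escape rate game: from $x_0\in\operatorname{Int}C$, at each turn $k\ge1$ Min chooses $a_k\in\mathcal{A}$, then Max, after observing it, chooses $b_k\in\mathcal{B}$, and $x_k=T_{a_kb_k}(x_{k-1})$. Strategies map finite histories to actions; payoff $J(\sigma,\tau)=\limsup_k\frac1k\operatorname{Funk}(x_k,x_0)$, minimized by Min, maximized by Max. The value $\rho$ is the number such that for every $\epsilon>0$ there exist strategies $\sigma^*,\tau^*$ with $J(\sigma^*,\tau)\le\rho+\epsilon$ and $J(\sigma,\tau^* )\ge\rho-\epsilon$ for all $\sigma,\tau$. *)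

theory Defs
  imports "HOL-Analysis.Analysis"
begin

definition dual_cone :: "'a::euclidean_space set \<Rightarrow> 'a set" where
  "dual_cone C = {y. \<forall>x\<in>C. 0 \<le> x \<bullet> y}"

definition pointed_cone :: "'a::euclidean_space set \<Rightarrow> bool" where
  "pointed_cone C \<longleftrightarrow> cone C \<and> C \<inter> uminus ` C \<subseteq> {0}"

definition cross_section :: "'a::euclidean_space set \<Rightarrow> 'a \<Rightarrow> 'a set" where
  "cross_section C e = {x\<in>C. x \<bullet> e = 1}"

definition Funk :: "'a::euclidean_space set \<Rightarrow> 'a \<Rightarrow> 'a \<Rightarrow> real" where
  "Funk C x y = ln (Inf {l. l > 0 \<and> l *\<^sub>R y - x \<in> C})"

definition Hil :: "'a::euclidean_space set \<Rightarrow> 'a \<Rightarrow> 'a \<Rightarrow> real" where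
  "Hil C x y = Funk C x y + Funk C y x"

text \<open>Lip_1(Y): functions on Y (represented as total functions, only values on Y matter).\<close>
definition Lip1 :: "'a::euclidean_space set \<Rightarrow> 'a set \<Rightarrow> ('a \<Rightarrow> real) set" where
  "Lip1 C Y = {f. \<forall>x\<in>Y. \<forall>y\<in>Y. f x - f y \<le> Funk C x y}"

definition ShapleyF :: "'b set \<Rightarrow> 'c set \<Rightarrow> ('b \<Rightarrow> 'c \<Rightarrow> 'a::euclidean_space \<Rightarrow> 'a) \<Rightarrow> 'a
    \<Rightarrow> ('a \<Rightarrow> real) \<Rightarrow> 'a \<Rightarrow> real" where
  "ShapleyF A B T e w x =
     (INF a\<in>A. SUP b\<in>B. ln (T a b x \<bullet> e) + w ((1 / (T a b x \<bullet> e)) *\<^sub>R T a b x))"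

definition Iplus :: "'a::euclidean_space set \<Rightarrow> 'a set \<Rightarrow> ('a \<Rightarrow> real) \<Rightarrow> 'a \<Rightarrow> real" where
  "Iplus C Xh v x = Min ((\<lambda>y. v y + Funk C x y) ` Xh)"

text \<open>Histories are lists of past action pairs (the states are determined
  by x0 and the actions). Min's strategy maps a history to an action; Max's strategy maps a
  history and Min's current action to an action.\<close>
fun game_hist :: "(('b \<times> 'c) list \<Rightarrow> 'b) \<Rightarrow> (('b \<times> 'c) list \<Rightarrow> 'b \<Rightarrow> 'c) \<Rightarrow> nat \<Rightarrow> ('b \<times> 'c) list" where
  "game_hist \<sigma> \<tau> 0 = []"
| "game_hist \<sigma> \<tau> (Suc k) =
     game_hist \<sigma> \<tau> k @ [(\<sigma> (game_hist \<sigma> \<tau> k), \<tau> (game_hist \<sigma> \<tau> k) (\<sigma> (game_hist \<sigma> \<tau> k)))]"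

definition game_state :: "('b \<Rightarrow> 'c \<Rightarrow> 'a \<Rightarrow> 'a) \<Rightarrow> 'a \<Rightarrow> ('b \<times> 'c) list \<Rightarrow> 'a" where
  "game_state T x0 h = foldl (\<lambda>x ab. T (fst ab) (snd ab) x) x0 h"

definition escape_payoff :: "'a::euclidean_space set \<Rightarrow> ('b \<Rightarrow> 'c \<Rightarrow> 'a \<Rightarrow> 'a) \<Rightarrow> 'a
    \<Rightarrow> (('b \<times> 'c) list \<Rightarrow> 'b) \<Rightarrow> (('b \<times> 'c) list \<Rightarrow> 'b \<Rightarrow> 'c) \<Rightarrow> ereal" where
  "escape_payoff C T x0 \<sigma> \<tau> =
     limsup (\<lambda>k. ereal (Funk C (game_state T x0 (game_hist \<sigma> \<tau> k)) x0 / real k))"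

definition min_strategies :: "'b set \<Rightarrow> (('b \<times> 'c) list \<Rightarrow> 'b) set" where
  "min_strategies A = {\<sigma>. \<forall>h. \<sigma> h \<in> A}"

definition max_strategies :: "'c set \<Rightarrow> (('b \<times> 'c) list \<Rightarrow> 'b \<Rightarrow> 'c) set" where
  "max_strategies B = {\<tau>. \<forall>h a. \<tau> h a \<in> B}"

definition is_escape_value :: "'a::euclidean_space set \<Rightarrow> 'b set \<Rightarrow> 'c set
    \<Rightarrow> ('b \<Rightarrow> 'c \<Rightarrow> 'a \<Rightarrow> 'a) \<Rightarrow> 'a \<Rightarrow> real \<Rightarrow> bool" where
  "is_escape_value C A B T x0 \<rho> \<longleftrightarrow>
     (\<forall>\<epsilon>>0. \<exists>\<sigma>s\<in>min_strategies A. \<exists>\<tau>s\<in>max_strategies B.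
        (\<forall>\<tau>\<in>max_strategies B. escape_payoff C T x0 \<sigma>s \<tau> \<le> ereal (\<rho> + \<epsilon>)) \<and>
        (\<forall>\<sigma>\<in>min_strategies A. ereal (\<rho> - \<epsilon>) \<le> escape_payoff C T x0 \<sigma> \<tau>s))"

end

theory Submission
  imports Defs
begin

locale funk_setting =
  fixes C :: "'a::euclidean_space set" and e :: 'a
  assumes cvx: "convex C" and pc: "pointed_cone C" and eint: "e \<in> interior (dual_cone C)"
begin

lemma cone: "cone C" using pc by (simp add: pointed_cone_def)

lemma scale_mem: "x \<in> C \<Longrightarrow> 0 \<le> c \<Longrightarrow> c *\<^sub>R x \<in> C"
  using cone by (simp add: cone_def)

lemma add_mem: assumes "u \<in> C" "w \<in> C" shows "u + w \<in> C"
proof -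
  have "(1/2) *\<^sub>R u + (1/2) *\<^sub>R w \<in> C" using cvx assms by (simp add: convex_def)
  then have "2 *\<^sub>R ((1/2) *\<^sub>R u + (1/2) *\<^sub>R w) \<in> C" by (rule scale_mem) simp
  then show ?thesis by (simp add: scaleR_add_right)
qed

lemma pointed: "x \<in> C \<Longrightarrow> - x \<in> C \<Longrightarrow> x = 0"
proof -
  assume a: "x \<in> C" "- x \<in> C"
  have "x \<in> uminus ` C" using a(2) by (metis image_eqI minus_minus)
  then show "x = 0" using a(1) pc by (auto simp: pointed_cone_def)
qed

lemma zero_notin_int: "0 \<notin> interior C"
proof
  assume "0 \<in> interior C"
  then obtain r where r: "r > 0" "ball 0 r \<subseteq> C" by (auto simp: mem_interior)
  obtain b :: 'a where b: "b \<in> Basis" using nonempty_Basis by blast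
  define u where "u = (r/2) *\<^sub>R b"
  have nu: "norm u = r/2" using r b by (simp add: u_def norm_Basis)
  have "u \<in> C" "- u \<in> C" using r nu by (auto intro!: subsetD[OF r(2)])
  then have "u = 0" by (rule pointed)
  then show False using nu r by simp
qed

lemma pos_e: assumes "x \<in> C" "x \<noteq> 0" shows "0 < x \<bullet> e"
proof -
  obtain r where r: "r > 0" "ball e r \<subseteq> dual_cone C" using eint by (auto simp: mem_interior)
  define y where "y = e - ((r/2) / norm x) *\<^sub>R x"
  have "dist e y = r/2" using assms r by (simp add: y_def dist_norm)
  then have "y \<in> dual_cone C" using r by auto
  then have "0 \<le> x \<bullet> y" using assms by (auto simp: dual_cone_def)
  also have "x \<bullet> y = x \<bullet> e - (r/2) * norm x"
    using assms by (simp add: y_def inner_diff_right power2_norm_eq_inner[symmetric] power2_eq_square)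
  finally have "(r/2) * norm x \<le> x \<bullet> e" by simp
  moreover have "0 < (r/2) * norm x" using r assms by simp
  ultimately show ?thesis by linarith
qed

lemma int_mem: "x \<in> interior C \<Longrightarrow> x \<in> C" using interior_subset by blast

lemma int_ne0: "x \<in> interior C \<Longrightarrow> x \<noteq> 0" using zero_notin_int by auto

lemma int_pos: "x \<in> interior C \<Longrightarrow> 0 < x \<bullet> e"
  using pos_e int_mem int_ne0 by blast

lemma dual_e: "x \<in> C \<Longrightarrow> 0 \<le> x \<bullet> e"
  using eint interior_subset by (fastforce simp: dual_cone_def)

lemma scale_int: assumes "x \<in> interior C" "c > 0" shows "c *\<^sub>R x \<in> interior C"
proof -
  obtain r where r: "r > 0" "ball x r \<subseteq> C" using assms by (auto simp: mem_interior)
  have "ball (c *\<^sub>R x) (c * r) \<subseteq> C"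
  proof
    fix z assume z: "z \<in> ball (c *\<^sub>R x) (c * r)"
    have eq: "x - (1/c) *\<^sub>R z = (1/c) *\<^sub>R (c *\<^sub>R x - z)" using assms(2) by (simp add: algebra_simps)
    have "dist x ((1/c) *\<^sub>R z) = dist (c *\<^sub>R x) z / c"
      using assms(2) by (simp only: dist_norm eq norm_scaleR) simp
    also have "\<dots> < r" using z assms(2) by (simp add: divide_less_eq mult.commute)
    finally have "(1/c) *\<^sub>R z \<in> C" using r by auto
    then have "c *\<^sub>R ((1/c) *\<^sub>R z) \<in> C" by (rule scale_mem) (use assms(2) in simp)
    then show "z \<in> C" using assms(2) by simp
  qed
  moreover have "c * r > 0" using r assms by simp
  ultimately show ?thesis unfolding mem_interior by blast
qed

definition FS :: "'a \<Rightarrow> 'a \<Rightarrow> real set" where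
  "FS x y = {l. l > 0 \<and> l *\<^sub>R y - x \<in> C}"

lemma Funk_FS: "Funk C x y = ln (Inf (FS x y))" by (simp add: Funk_def FS_def)

lemma FS_big: assumes "y \<in> interior C"
  obtains r where "r > 0" "\<And>x. (norm x + r) / r \<in> FS x y"
proof -
  obtain r where r: "r > 0" "ball y r \<subseteq> C" using assms by (auto simp: mem_interior)
  have "(norm x + r) / r \<in> FS x y" for x
  proof -
    define l where "l = (norm x + r) / r"
    have l: "l > 0" using r by (simp add: l_def add_nonneg_pos)
    have "norm ((1/l) *\<^sub>R x) = norm x * r / (norm x + r)"
      using r l by (simp add: l_def)
    also have "\<dots> < r" using r by (simp add: divide_less_eq add_nonneg_pos)
    finally have "y - (1/l) *\<^sub>R x \<in> C" using r by (auto simp: dist_norm)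
    then have "l *\<^sub>R (y - (1/l) *\<^sub>R x) \<in> C" using l by (intro scale_mem) auto
    then show ?thesis using l by (simp add: FS_def l_def[symmetric] scaleR_diff_right)
  qed
  then show ?thesis using that r by blast
qed

lemma FS_lb: assumes "x \<in> interior C" "y \<in> interior C" "l \<in> FS x y"
  shows "(x \<bullet> e) / (y \<bullet> e) \<le> l"
proof -
  have "0 \<le> (l *\<^sub>R y - x) \<bullet> e" using assms(3) dual_e by (auto simp: FS_def)
  then have "x \<bullet> e \<le> l * (y \<bullet> e)" by (simp add: inner_diff_left)
  then show ?thesis using int_pos[OF assms(2)] by (simp add: divide_le_eq)
qed

lemma FS_ne: "y \<in> interior C \<Longrightarrow> FS x y \<noteq> {}" using FS_big by blast

lemma FS_bdd: "bdd_below (FS x y)" by (rule bdd_belowI[of _ 0]) (auto simp: FS_def)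

lemma FS_Inf_ge: assumes "x \<in> interior C" "y \<in> interior C"
  shows "(x \<bullet> e) / (y \<bullet> e) \<le> Inf (FS x y)"
  using assms by (intro cInf_greatest FS_ne FS_lb) auto

lemma FS_Inf_pos: assumes "x \<in> interior C" "y \<in> interior C"
  shows "0 < Inf (FS x y)"
  using FS_Inf_ge[OF assms] divide_pos_pos[OF int_pos[OF assms(1)] int_pos[OF assms(2)]]
  by linarith

lemma Funk_lower: assumes "x \<in> interior C" "y \<in> interior C"
  shows "ln (x \<bullet> e) - ln (y \<bullet> e) \<le> Funk C x y"
proof -
  have "ln ((x \<bullet> e) / (y \<bullet> e)) \<le> ln (Inf (FS x y))"
    using FS_Inf_ge[OF assms] int_pos[OF assms(1)] int_pos[OF assms(2)] FS_Inf_pos[OF assms]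
    by (subst ln_le_cancel_iff) auto
  then show ?thesis using int_pos[OF assms(1)] int_pos[OF assms(2)] by (simp add: Funk_FS ln_div)
qed

lemma Funk_upper: assumes "y \<in> interior C"
  obtains r where "r > 0" "\<And>x. x \<in> interior C \<Longrightarrow> Funk C x y \<le> ln ((norm x + r) / r)"
proof -
  obtain r where r: "r > 0" "\<And>x. (norm x + r) / r \<in> FS x y" using FS_big[OF assms] by blast
  have "Funk C x y \<le> ln ((norm x + r) / r)" if "x \<in> interior C" for x
  proof -
    have "Inf (FS x y) \<le> (norm x + r) / r" using r by (intro cInf_lower FS_bdd) auto
    then show ?thesis using FS_Inf_pos[OF that assms] by (simp add: Funk_FS)
  qed
  then show ?thesis using that r by blast
qed

lemma Funk_self: assumes "x \<in> interior C" shows "Funk C x x = 0"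
proof -
  have "Inf (FS x x) = 1"
  proof (rule cInf_eq_minimum)
    have "0 \<in> C" using scale_mem[OF int_mem[OF assms], of 0] by simp
    then show "1 \<in> FS x x" by (simp add: FS_def)
  next
    fix l assume l: "l \<in> FS x x"
    show "1 \<le> l"
    proof (rule ccontr)
      assume "\<not> 1 \<le> l"
      then have "(1/(1-l)) *\<^sub>R (l *\<^sub>R x - x) \<in> C" using l by (intro scale_mem) (auto simp: FS_def)
      also have "(1/(1-l)) *\<^sub>R (l *\<^sub>R x - x) = - x" using \<open>\<not> 1 \<le> l\<close>
      proof -
        have "l *\<^sub>R x - x = (l - 1) *\<^sub>R x" by (simp add: algebra_simps)
        moreover have "(1/(1-l)) * (l - 1) = -1" using \<open>\<not> 1 \<le> l\<close> by (simp add: field_simps)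
        ultimately show ?thesis by simp
      qed
      finally have "x = 0" using pointed int_mem[OF assms] by blast
      then show False using int_ne0[OF assms] by simp
    qed
  qed
  then show ?thesis by (simp add: Funk_FS)
qed


lemma relint_sub: assumes p: "p \<in> interior C"
  shows "rel_interior (cross_section C e) \<subseteq> interior C"
proof
  fix z assume z: "z \<in> rel_interior (cross_section C e)"
  define p' where "p' = (1 / (p \<bullet> e)) *\<^sub>R p"
  have pe: "p \<bullet> e > 0" using int_pos[OF p] .
  have p'i: "p' \<in> interior C" unfolding p'_def using scale_int[OF p] pe by simp
  have p'D: "p' \<in> cross_section C e" using int_mem[OF p'i] pe by (simp add: cross_section_def p'_def)
  have eqD: "cross_section C e = C \<inter> {x. e \<bullet> x = 1}" by (auto simp: cross_section_def inner_commute)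
  have cD: "convex (cross_section C e)" unfolding eqD by (intro convex_Int cvx convex_hyperplane)
  obtain \<mu> where mu: "\<mu> > 1" "(1 - \<mu>) *\<^sub>R p' + \<mu> *\<^sub>R z \<in> cross_section C e"
    using convex_rel_interior_iff[OF cD] z p'D by blast
  define w where "w = (1 - \<mu>) *\<^sub>R p' + \<mu> *\<^sub>R z"
  have wC: "w \<in> closure C" using mu(2) closure_subset unfolding w_def cross_section_def by auto
  have "w - (1 - 1/\<mu>) *\<^sub>R (w - p') \<in> interior C"
    using mem_interior_closure_convex_shrink[OF cvx p'i wC, of "1 - 1/\<mu>"] mu(1) by simp
  also have "w - (1 - 1/\<mu>) *\<^sub>R (w - p') = z"
  proof -
    have e1: "w - (1 - 1/\<mu>) *\<^sub>R (w - p') = (1/\<mu>) *\<^sub>R w + (1 - 1/\<mu>) *\<^sub>R p'" by (simp add: algebra_simps)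
    have e2: "(1/\<mu>) *\<^sub>R w = ((1-\<mu>)/\<mu>) *\<^sub>R p' + z" using mu(1) by (simp add: w_def scaleR_add_right)
    have e3: "((1-\<mu>)/\<mu>) + (1 - 1/\<mu>) = 0" using mu(1) by (simp add: field_simps)
    have "(1/\<mu>) *\<^sub>R w + (1 - 1/\<mu>) *\<^sub>R p' = (((1-\<mu>)/\<mu>) + (1 - 1/\<mu>)) *\<^sub>R p' + z"
      unfolding e2 scaleR_left_distrib by (simp add: algebra_simps)
    also have "\<dots> = z" unfolding e3 by simp
    finally have "(1/\<mu>) *\<^sub>R w + (1 - 1/\<mu>) *\<^sub>R p' = z" .
    then show ?thesis using e1 by simp
  qed
  finally show "z \<in> interior C" .
qed

lemma Funk_tri: assumes x: "x \<in> interior C" and y: "y \<in> interior C" and z: "z \<in> interior C"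
  shows "Funk C x z \<le> Funk C x y + Funk C y z"
proof -
  define a where "a = Inf (FS x y)"
  define b where "b = Inf (FS y z)"
  define c where "c = Inf (FS x z)"
  have a: "a > 0" using FS_Inf_pos[OF x y] a_def by simp
  have b: "b > 0" using FS_Inf_pos[OF y z] b_def by simp
  have c: "c > 0" using FS_Inf_pos[OF x z] c_def by simp
  have prod: "l1 * l2 \<in> FS x z" if "l1 \<in> FS x y" "l2 \<in> FS y z" for l1 l2
  proof -
    have "l1 *\<^sub>R (l2 *\<^sub>R z - y) \<in> C" using that by (intro scale_mem) (auto simp: FS_def)
    then have "l1 *\<^sub>R (l2 *\<^sub>R z - y) + (l1 *\<^sub>R y - x) \<in> C" using that by (intro add_mem) (auto simp: FS_def)
    moreover have "l1 *\<^sub>R (l2 *\<^sub>R z - y) + (l1 *\<^sub>R y - x) = (l1 * l2) *\<^sub>R z - x"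
      by (simp add: algebra_simps)
    ultimately show ?thesis using that by (auto simp: FS_def)
  qed
  have "c / l2 \<le> a" if l2: "l2 \<in> FS y z" for l2
  proof -
    have l2p: "l2 > 0" using l2 by (simp add: FS_def)
    show ?thesis unfolding a_def
    proof (rule cInf_greatest[OF FS_ne[OF y]])
      fix l1 assume "l1 \<in> FS x y"
      then have "c \<le> l1 * l2" unfolding c_def using prod l2 by (intro cInf_lower FS_bdd) auto
      then show "c / l2 \<le> l1" using l2p by (simp add: pos_divide_le_eq)
    qed
  qed
  then have "c / a \<le> b" unfolding b_def
    using a by (intro cInf_greatest[OF FS_ne[OF z]]) (auto simp: pos_divide_le_eq FS_def mult.commute pos_le_divide_eq)
  then have "c \<le> a * b" using a by (simp add: pos_divide_le_eq mult.commute)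
  then have "ln c \<le> ln (a * b)" using a b c by simp
  then show ?thesis using a b by (simp add: Funk_FS a_def b_def c_def ln_mult)
qed

lemma FS_scale_iff: assumes "c > 0" shows "l \<in> FS (c *\<^sub>R x) y \<longleftrightarrow> l / c \<in> FS x y"
proof -
  have eq: "(l / c) *\<^sub>R y - x = (1/c) *\<^sub>R (l *\<^sub>R y - c *\<^sub>R x)" using assms by (simp add: algebra_simps)
  have eq2: "l *\<^sub>R y - c *\<^sub>R x = c *\<^sub>R ((l / c) *\<^sub>R y - x)" using assms by (simp add: algebra_simps)
  show ?thesis unfolding FS_def using assms
    by (auto simp: zero_less_divide_iff) (metis eq less_eq_real_def scale_mem zero_less_divide_1_iff,
        metis eq2 less_eq_real_def scale_mem)
qed

lemma Funk_scale: assumes x: "x \<in> interior C" and y: "y \<in> interior C" and c: "c > 0"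
  shows "Funk C (c *\<^sub>R x) y = ln c + Funk C x y"
proof -
  define a where "a = Inf (FS x y)"
  define d where "d = Inf (FS (c *\<^sub>R x) y)"
  have a: "a > 0" using FS_Inf_pos[OF x y] a_def by simp
  obtain l0 where l0: "l0 \<in> FS x y" using FS_ne[OF y] by blast
  have "c * l0 \<in> FS (c *\<^sub>R x) y" using l0 c FS_scale_iff by simp
  then have ne: "FS (c *\<^sub>R x) y \<noteq> {}" by blast
  have "c * a \<le> d" unfolding d_def
  proof (rule cInf_greatest[OF ne])
    fix l assume "l \<in> FS (c *\<^sub>R x) y"
    then have "a \<le> l / c" unfolding a_def using FS_scale_iff[OF c] by (intro cInf_lower FS_bdd) auto
    then show "c * a \<le> l" using c by (simp add: le_divide_eq mult.commute)
  qed
  moreover have "d / c \<le> a" unfolding a_def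
  proof (rule cInf_greatest[OF FS_ne[OF y]])
    fix l assume "l \<in> FS x y"
    then have "c * l \<in> FS (c *\<^sub>R x) y" using FS_scale_iff[OF c] c by simp
    then have "d \<le> c * l" unfolding d_def by (intro cInf_lower FS_bdd)
    then show "d / c \<le> l" using c by (simp add: divide_le_eq mult.commute)
  qed
  ultimately have "d = c * a" using c by (simp add: divide_le_eq mult.commute)
  then show ?thesis using a c by (simp add: Funk_FS a_def d_def ln_mult)
qed

lemma Funk_scale2: assumes x: "x \<in> interior C" and y: "y \<in> interior C" and c: "c > 0"
  shows "Funk C x (c *\<^sub>R y) = Funk C x y - ln c"
proof -
  have cy: "c *\<^sub>R y \<in> interior C" using scale_int[OF y c] .
  have "Funk C y (c *\<^sub>R y) = Funk C ((1/c) *\<^sub>R (c *\<^sub>R y)) (c *\<^sub>R y)" using c by simp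
  also have "\<dots> = ln (1/c) + 0" using Funk_scale[OF cy cy, of "1/c"] Funk_self[OF cy] c by simp
  finally have h1: "Funk C y (c *\<^sub>R y) = - ln c" using c by (simp add: ln_div)
  have h2: "Funk C (c *\<^sub>R y) y = ln c" using Funk_scale[OF y y c] Funk_self[OF y] by simp
  show ?thesis using Funk_tri[OF x y cy] Funk_tri[OF x cy y] h1 h2 by linarith
qed

end

locale W_setting = funk_setting +
  fixes Xh :: "'a set" and v :: "'a \<Rightarrow> real"
  assumes Xh_fin: "finite Xh" and Xh_ne: "Xh \<noteq> {}" and Xh_int: "Xh \<subseteq> interior C"
begin

abbreviation W where "W \<equiv> Iplus C Xh v"

lemma W_le: "y \<in> Xh \<Longrightarrow> W z \<le> v y + Funk C z y"
  unfolding Iplus_def using Xh_fin by (intro Min_le) auto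

lemma W_att: obtains y where "y \<in> Xh" "W z = v y + Funk C z y"
proof -
  have "W z \<in> (\<lambda>y. v y + Funk C z y) ` Xh" unfolding Iplus_def using Xh_fin Xh_ne by (intro Min_in) auto
  then show ?thesis using that by blast
qed

lemma W_lip: assumes "p \<in> interior C" "q \<in> interior C" shows "W p \<le> W q + Funk C p q"
proof -
  obtain y where y: "y \<in> Xh" "W q = v y + Funk C q y" using W_att by blast
  have "W p \<le> v y + Funk C p y" using W_le[OF y(1)] .
  also have "\<dots> \<le> v y + Funk C p q + Funk C q y" using Funk_tri[OF assms, of y] y Xh_int by auto
  finally show ?thesis using y by simp
qed

lemma W_scale: assumes z: "z \<in> interior C" and c: "c > 0" shows "W (c *\<^sub>R z) = ln c + W z"
proof -
  obtain y1 where y1: "y1 \<in> Xh" "W (c *\<^sub>R z) = v y1 + Funk C (c *\<^sub>R z) y1" using W_att by blast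
  obtain y2 where y2: "y2 \<in> Xh" "W z = v y2 + Funk C z y2" using W_att by blast
  have "W z \<le> v y1 + Funk C z y1" using W_le[OF y1(1)] .
  moreover have "W (c *\<^sub>R z) \<le> v y2 + Funk C (c *\<^sub>R z) y2" using W_le[OF y2(1)] .
  moreover have "Funk C (c *\<^sub>R z) y1 = ln c + Funk C z y1" using Funk_scale[OF z _ c] y1 Xh_int by auto
  moreover have "Funk C (c *\<^sub>R z) y2 = ln c + Funk C z y2" using Funk_scale[OF z _ c] y2 Xh_int by auto
  ultimately show ?thesis using y1 y2 by linarith
qed

lemma W_shapley: assumes z: "z \<in> interior C"
  shows "ln (z \<bullet> e) + W ((1 / (z \<bullet> e)) *\<^sub>R z) = W z"
  using W_scale[OF z, of "1 / (z \<bullet> e)"] int_pos[OF z] by (simp add: ln_div)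

end

lemma limsup_upper:
  fixes f :: "nat \<Rightarrow> real"
  assumes "\<And>k. f k \<le> real k * c + d"
  shows "limsup (\<lambda>k. ereal (f k / real k)) \<le> ereal c"
proof -
  have ev: "eventually (\<lambda>k. ereal (f k / real k) \<le> ereal (c + d / real k)) sequentially"
    using eventually_ge_at_top[of "1::nat"]
  proof eventually_elim
    case (elim k)
    then have "f k / real k \<le> (real k * c + d) / real k" using assms by (intro divide_right_mono) auto
    also have "\<dots> = c + d / real k" using elim by (simp add: field_simps)
    finally show ?case by simp
  qed
  have "((\<lambda>k. c + d / real k) \<longlongrightarrow> c + 0) sequentially"
    by (intro tendsto_add tendsto_const lim_const_over_n)
  then have "((\<lambda>k. ereal (c + d / real k)) \<longlongrightarrow> ereal c) sequentially" by simp
  then have "limsup (\<lambda>k. ereal (c + d / real k)) = ereal c" by (intro lim_imp_Limsup) auto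
  then show ?thesis using Limsup_mono[OF ev] by simp
qed

lemma limsup_lower:
  fixes f :: "nat \<Rightarrow> real"
  assumes "\<And>k. real k * c - d \<le> f k"
  shows "ereal c \<le> limsup (\<lambda>k. ereal (f k / real k))"
proof -
  have ev: "eventually (\<lambda>k. ereal (c - d / real k) \<le> ereal (f k / real k)) sequentially"
    using eventually_ge_at_top[of "1::nat"]
  proof eventually_elim
    case (elim k)
    have "c - d / real k = (real k * c - d) / real k" using elim by (simp add: field_simps)
    also have "\<dots> \<le> f k / real k" using assms elim by (intro divide_right_mono) auto
    finally show ?case by simp
  qed
  have "((\<lambda>k. c - d / real k) \<longlongrightarrow> c - 0) sequentially"
    by (intro tendsto_diff tendsto_const lim_const_over_n)
  then have "((\<lambda>k. ereal (c - d / real k)) \<longlongrightarrow> ereal c) sequentially" by simp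
  then have "limsup (\<lambda>k. ereal (c - d / real k)) = ereal c" by (intro lim_imp_Limsup) auto
  then show ?thesis using Limsup_mono[OF ev] by simp
qed

lemma hist_step: "game_state T x (game_hist \<sigma> \<tau> (Suc k)) =
  T (\<sigma> (game_hist \<sigma> \<tau> k)) (\<tau> (game_hist \<sigma> \<tau> k) (\<sigma> (game_hist \<sigma> \<tau> k))) (game_state T x (game_hist \<sigma> \<tau> k))"
  by (simp add: game_state_def)

locale game_setting = W_setting +
  fixes A :: "'b set" and B :: "'c set" and T :: "'b \<Rightarrow> 'c \<Rightarrow> 'a \<Rightarrow> 'a" and K :: "'a set"
    and h :: real and lam :: real
  assumes A_ne: "A \<noteq> {}" and B_ne: "B \<noteq> {}"
    and T_self: "\<And>a b x. a \<in> A \<Longrightarrow> b \<in> B \<Longrightarrow> x \<in> interior C \<Longrightarrow> T a b x \<in> interior C"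
    and T_nonexp: "\<And>a b x y. a \<in> A \<Longrightarrow> b \<in> B \<Longrightarrow> x \<in> interior C \<Longrightarrow> y \<in> interior C
                     \<Longrightarrow> Funk C (T a b x) (T a b y) \<le> Funk C x y"
    and T_compact: "\<And>K'. compact K' \<Longrightarrow> K' \<subseteq> interior C \<Longrightarrow>
                     compact {T a b x | a b x. a \<in> A \<and> b \<in> B \<and> x \<in> K'}"
    and K_cone: "cone K"
    and K_inv: "\<And>a b. a \<in> A \<Longrightarrow> b \<in> B \<Longrightarrow> T a b ` K \<subseteq> K"
    and Xh_net: "K \<inter> cross_section C e \<subseteq> (\<Union>y\<in>Xh. {x. Hil C x y < h})"
    and Xh_K: "Xh \<subseteq> K"
    and fixpt: "\<And>x. x \<in> Xh \<Longrightarrow> ShapleyF A B T e W x = lam + v x"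
begin

lemma bounds: assumes x: "x \<in> Xh"
  obtains L U where "\<And>a b. a \<in> A \<Longrightarrow> b \<in> B \<Longrightarrow> L \<le> W (T a b x) \<and> W (T a b x) \<le> U"
proof -
  define S where "S = {T a b z | a b z. a \<in> A \<and> b \<in> B \<and> z \<in> {x}}"
  have xi: "x \<in> interior C" using x Xh_int by auto
  have cS: "compact S" unfolding S_def using xi by (intro T_compact) auto
  have Sint: "S \<subseteq> interior C" unfolding S_def using xi T_self by auto
  have Sne: "S \<noteq> {}" unfolding S_def using A_ne B_ne by auto
  have mem: "T a b x \<in> S" if "a \<in> A" "b \<in> B" for a b unfolding S_def using that by auto
  obtain R where R: "\<And>z. z \<in> S \<Longrightarrow> norm z \<le> R" using compact_imp_bounded[OF cS] by (auto simp: bounded_iff)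
  obtain y0 where y0: "y0 \<in> Xh" using Xh_ne by blast
  have y0i: "y0 \<in> interior C" using y0 Xh_int by auto
  obtain r where r: "r > 0" "\<And>z. z \<in> interior C \<Longrightarrow> Funk C z y0 \<le> ln ((norm z + r) / r)"
    using Funk_upper[OF y0i] by blast
  have up: "W z \<le> v y0 + ln ((R + r) / r)" if "z \<in> S" for z
  proof -
    have "W z \<le> v y0 + Funk C z y0" by (rule W_le[OF y0])
    also have "Funk C z y0 \<le> ln ((norm z + r) / r)" using r that Sint by auto
    also have "ln ((norm z + r) / r) \<le> ln ((R + r) / r)"
    proof -
      have p: "0 < (norm z + r) / r" using r by (simp add: add_nonneg_pos)
      have q: "(norm z + r) / r \<le> (R + r) / r" using R[OF that] r by (simp add: divide_right_mono)
      show ?thesis using p q by (subst ln_le_cancel_iff) auto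
    qed
    finally show ?thesis by simp
  qed
  obtain z0 where z0: "z0 \<in> S" "\<And>z. z \<in> S \<Longrightarrow> z0 \<bullet> e \<le> z \<bullet> e"
  proof -
    have "continuous_on S (\<lambda>z. z \<bullet> e)" by (intro continuous_intros)
    then show ?thesis using continuous_attains_inf[OF cS Sne, of "\<lambda>z. z \<bullet> e"] that by blast
  qed
  have m: "0 < z0 \<bullet> e" using int_pos z0 Sint by auto
  define D where "D = (\<Sum>y\<in>Xh. \<bar>v y - ln (y \<bullet> e)\<bar>)"
  have lo: "ln (z0 \<bullet> e) - D \<le> W z" if "z \<in> S" for z
  proof -
    obtain y where y: "y \<in> Xh" "W z = v y + Funk C z y" using W_att by blast
    have yi: "y \<in> interior C" using y Xh_int by auto
    have zi: "z \<in> interior C" using that Sint by auto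
    have "\<bar>v y - ln (y \<bullet> e)\<bar> \<le> D" unfolding D_def using y Xh_fin
      by (intro member_le_sum) auto
    moreover have "ln (z0 \<bullet> e) \<le> ln (z \<bullet> e)" using z0(2)[OF that] m by simp
    moreover have "ln (z \<bullet> e) - ln (y \<bullet> e) \<le> Funk C z y" using Funk_lower[OF zi yi] .
    ultimately show ?thesis using y by linarith
  qed
  show ?thesis using that[of "ln (z0 \<bullet> e) - D" "v y0 + ln ((R + r) / r)"] up lo mem by blast
qed

lemma fix_W: assumes x: "x \<in> Xh" shows "(INF a\<in>A. SUP b\<in>B. W (T a b x)) = lam + v x"
proof -
  have xi: "x \<in> interior C" using x Xh_int by auto
  have "ShapleyF A B T e W x = (INF a\<in>A. SUP b\<in>B. W (T a b x))"
    unfolding ShapleyF_def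
    by (intro INF_cong SUP_cong refl W_shapley T_self xi)
  then show ?thesis using fixpt[OF x] by simp
qed

lemma bdds: assumes x: "x \<in> Xh"
  shows "\<And>a. a \<in> A \<Longrightarrow> bdd_above ((\<lambda>b. W (T a b x)) ` B)"
    and "bdd_below ((\<lambda>a. SUP b\<in>B. W (T a b x)) ` A)"
proof -
  obtain L U where LU: "\<And>a b. a \<in> A \<Longrightarrow> b \<in> B \<Longrightarrow> L \<le> W (T a b x) \<and> W (T a b x) \<le> U"
    using bounds[OF x] by blast
  show ba: "bdd_above ((\<lambda>b. W (T a b x)) ` B)" if "a \<in> A" for a
    using LU that by (intro bdd_aboveI[of _ U]) auto
  obtain b0 where b0: "b0 \<in> B" using B_ne by blast
  have "L \<le> (SUP b\<in>B. W (T a b x))" if "a \<in> A" for a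
  proof -
    have "L \<le> W (T a b0 x)" using LU that b0 by auto
    also have "\<dots> \<le> (SUP b\<in>B. W (T a b x))" using ba[OF that] b0 by (intro cSUP_upper)
    finally show ?thesis .
  qed
  then show "bdd_below ((\<lambda>a. SUP b\<in>B. W (T a b x)) ` A)" by (intro bdd_belowI[of _ L]) auto
qed

lemma min_step: assumes y: "y \<in> interior C" and eps: "\<epsilon> > 0"
  shows "\<exists>a\<in>A. \<forall>b\<in>B. W (T a b y) \<le> lam + W y + \<epsilon>"
proof -
  obtain ys where ys: "ys \<in> Xh" "W y = v ys + Funk C y ys" using W_att by blast
  have ysi: "ys \<in> interior C" using ys Xh_int by auto
  have "(INF a\<in>A. SUP b\<in>B. W (T a b ys)) < lam + v ys + \<epsilon>" using fix_W[OF ys(1)] eps by simp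
  then obtain a where a: "a \<in> A" "(SUP b\<in>B. W (T a b ys)) < lam + v ys + \<epsilon>"
    using cINF_less_iff[OF A_ne bdds(2)[OF ys(1)]] by blast
  have "W (T a b y) \<le> lam + W y + \<epsilon>" if b: "b \<in> B" for b
  proof -
    have "W (T a b y) \<le> W (T a b ys) + Funk C (T a b y) (T a b ys)"
      using W_lip T_self a b y ysi by auto
    also have "Funk C (T a b y) (T a b ys) \<le> Funk C y ys" using T_nonexp a b y ysi by auto
    also have "W (T a b ys) \<le> (SUP b\<in>B. W (T a b ys))" using bdds(1)[OF ys(1) a(1)] b by (intro cSUP_upper)
    finally show ?thesis using a ys by linarith
  qed
  then show ?thesis using a by blast
qed

lemma max_step: assumes y: "y \<in> interior C" "y \<in> K" and a: "a \<in> A" and eps: "\<epsilon> > 0"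
  shows "\<exists>b\<in>B. lam - h + W y - \<epsilon> \<le> W (T a b y)"
proof -
  define c where "c = y \<bullet> e"
  have c: "c > 0" using int_pos[OF y(1)] c_def by simp
  define yn where "yn = (1 / c) *\<^sub>R y"
  have yni: "yn \<in> interior C" using scale_int[OF y(1)] c yn_def by simp
  have "yn \<in> K" using K_cone y(2) c unfolding yn_def cone_def by simp
  moreover have "yn \<in> cross_section C e" using int_mem[OF yni] c
    by (simp add: cross_section_def yn_def c_def)
  ultimately obtain y' where y': "y' \<in> Xh" "Hil C yn y' < h" using Xh_net by blast
  have y'i: "y' \<in> interior C" using y' Xh_int by auto
  have yeq: "y = c *\<^sub>R yn" using c by (simp add: yn_def)
  have h1: "Funk C y y' = ln c + Funk C yn y'" using Funk_scale[OF yni y'i c] yeq by simp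
  have h2: "Funk C y' y = Funk C y' yn - ln c" using Funk_scale2[OF y'i yni c] yeq by simp
  have hil: "Funk C y y' + Funk C y' y < h" using h1 h2 y'(2) by (simp add: Hil_def)
  have "lam + v y' \<le> (SUP b\<in>B. W (T a b y'))"
    using fix_W[OF y'(1)] a by (metis cINF_lower bdds(2)[OF y'(1)])
  then have "lam + v y' - \<epsilon> < (SUP b\<in>B. W (T a b y'))" using eps by simp
  then obtain b where b: "b \<in> B" "lam + v y' - \<epsilon> < W (T a b y')"
    using less_cSUP_iff[OF B_ne bdds(1)[OF y'(1) a]] by blast
  have "W (T a b y') \<le> W (T a b y) + Funk C (T a b y') (T a b y)"
    using W_lip T_self a b y y'i by auto
  also have "Funk C (T a b y') (T a b y) \<le> Funk C y' y" using T_nonexp a b y y'i by auto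
  finally have "W (T a b y') \<le> W (T a b y) + Funk C y' y" by simp
  moreover have "W y \<le> v y' + Funk C y y'" using W_le[OF y'(1)] .
  ultimately have "lam - h + W y - \<epsilon> \<le> W (T a b y)" using b hil by linarith
  then show ?thesis using b by blast
qed


lemma strat_in: assumes "\<sigma> \<in> min_strategies A" "\<tau> \<in> max_strategies B"
  shows "\<sigma> hh \<in> A" "\<tau> hh a \<in> B"
  using assms by (auto simp: min_strategies_def max_strategies_def)

lemma st_int: assumes "\<sigma> \<in> min_strategies A" "\<tau> \<in> max_strategies B" "x \<in> interior C"
  shows "game_state T x (game_hist \<sigma> \<tau> k) \<in> interior C"
proof (induction k)
  case 0 then show ?case using assms by (simp add: game_state_def)
next
  case (Suc k) then show ?case unfolding hist_step using T_self strat_in[OF assms(1,2)] by blast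
qed

lemma st_K: assumes "\<sigma> \<in> min_strategies A" "\<tau> \<in> max_strategies B" "x \<in> K"
  shows "game_state T x (game_hist \<sigma> \<tau> k) \<in> K"
proof (induction k)
  case 0 then show ?case using assms by (simp add: game_state_def)
next
  case (Suc k) then show ?case unfolding hist_step using K_inv strat_in[OF assms(1,2)] by blast
qed

lemma st_nonexp: assumes "\<sigma> \<in> min_strategies A" "\<tau> \<in> max_strategies B" "x \<in> interior C" "y \<in> interior C"
  shows "Funk C (game_state T x (game_hist \<sigma> \<tau> k)) (game_state T y (game_hist \<sigma> \<tau> k)) \<le> Funk C x y"
proof (induction k)
  case 0 then show ?case by (simp add: game_state_def)
next
  case (Suc k) then show ?case unfolding hist_step
    using T_nonexp strat_in[OF assms(1,2)] st_int[OF assms(1,2,3)] st_int[OF assms(1,2,4)]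
    by (meson order_trans)
qed

definition sig_min :: "'a \<Rightarrow> real \<Rightarrow> ('b \<times> 'c) list \<Rightarrow> 'b" where
  "sig_min y0 \<epsilon> hh = (SOME a. a \<in> A \<and> (game_state T y0 hh \<in> interior C \<longrightarrow>
      (\<forall>b\<in>B. W (T a b (game_state T y0 hh)) \<le> lam + W (game_state T y0 hh) + \<epsilon>)))"

definition tau_max :: "'a \<Rightarrow> real \<Rightarrow> ('b \<times> 'c) list \<Rightarrow> 'b \<Rightarrow> 'c" where
  "tau_max y0 \<epsilon> hh a = (SOME b. b \<in> B \<and> (game_state T y0 hh \<in> interior C \<and> game_state T y0 hh \<in> K \<and> a \<in> A \<longrightarrow>
      lam - h + W (game_state T y0 hh) - \<epsilon> \<le> W (T a b (game_state T y0 hh))))"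

lemma sig_min_prop: assumes "\<epsilon> > 0"
  shows "sig_min y0 \<epsilon> hh \<in> A \<and> (game_state T y0 hh \<in> interior C \<longrightarrow>
      (\<forall>b\<in>B. W (T (sig_min y0 \<epsilon> hh) b (game_state T y0 hh)) \<le> lam + W (game_state T y0 hh) + \<epsilon>))"
proof -
  have "\<exists>a. a \<in> A \<and> (game_state T y0 hh \<in> interior C \<longrightarrow>
      (\<forall>b\<in>B. W (T a b (game_state T y0 hh)) \<le> lam + W (game_state T y0 hh) + \<epsilon>))"
  proof (cases "game_state T y0 hh \<in> interior C")
    case True then show ?thesis using min_step[OF True assms] by blast
  next
    case False then show ?thesis using A_ne by blast
  qed
  then show ?thesis unfolding sig_min_def by (rule someI_ex)
qed

lemma tau_max_prop: assumes "\<epsilon> > 0"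
  shows "tau_max y0 \<epsilon> hh a \<in> B \<and> (game_state T y0 hh \<in> interior C \<and> game_state T y0 hh \<in> K \<and> a \<in> A \<longrightarrow>
      lam - h + W (game_state T y0 hh) - \<epsilon> \<le> W (T a (tau_max y0 \<epsilon> hh a) (game_state T y0 hh)))"
proof -
  have "\<exists>b. b \<in> B \<and> (game_state T y0 hh \<in> interior C \<and> game_state T y0 hh \<in> K \<and> a \<in> A \<longrightarrow>
      lam - h + W (game_state T y0 hh) - \<epsilon> \<le> W (T a b (game_state T y0 hh)))"
  proof (cases "game_state T y0 hh \<in> interior C \<and> game_state T y0 hh \<in> K \<and> a \<in> A")
    case True then show ?thesis using max_step[of "game_state T y0 hh" a \<epsilon>] assms by blast
  next
    case False then show ?thesis using B_ne by blast
  qed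
  then show ?thesis unfolding tau_max_def by (rule someI_ex)
qed

lemma sig_min_strat: "\<epsilon> > 0 \<Longrightarrow> sig_min y0 \<epsilon> \<in> min_strategies A"
  using sig_min_prop by (auto simp: min_strategies_def)

lemma tau_max_strat: "\<epsilon> > 0 \<Longrightarrow> tau_max y0 \<epsilon> \<in> max_strategies B"
  using tau_max_prop by (auto simp: max_strategies_def)

lemma min_bound: assumes y0: "y0 \<in> Xh" and x0: "x0 \<in> interior C" and eps: "\<epsilon> > 0"
  and tau: "\<tau> \<in> max_strategies B"
  shows "escape_payoff C T x0 (sig_min y0 \<epsilon>) \<tau> \<le> ereal (lam + \<epsilon>)"
proof -
  define \<sigma> where "\<sigma> = sig_min y0 \<epsilon>"
  have sig: "\<sigma> \<in> min_strategies A" using sig_min_strat[OF eps] \<sigma>_def by simp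
  have y0i: "y0 \<in> interior C" using y0 Xh_int by auto
  define y where "y k = game_state T y0 (game_hist \<sigma> \<tau> k)" for k
  define x where "x k = game_state T x0 (game_hist \<sigma> \<tau> k)" for k
  have yi: "y k \<in> interior C" for k unfolding y_def using st_int[OF sig tau y0i] .
  have xi: "x k \<in> interior C" for k unfolding x_def using st_int[OF sig tau x0] .
  have Wy: "W (y k) \<le> W y0 + real k * (lam + \<epsilon>)" for k
  proof (induction k)
    case 0 then show ?case by (simp add: y_def game_state_def)
  next
    case (Suc k)
    have "W (y (Suc k)) \<le> lam + W (y k) + \<epsilon>"
      using sig_min_prop[OF eps, of y0 "game_hist \<sigma> \<tau> k"] yi[of k] strat_in[OF sig tau]
      unfolding y_def hist_step \<sigma>_def by blast
    then show ?case using Suc by (simp add: algebra_simps)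
  qed
  define E where "E = (\<Sum>y\<in>Xh. \<bar>Funk C y x0 - v y\<bar>)"
  have "Funk C (x k) x0 \<le> real k * (lam + \<epsilon>) + (E + Funk C x0 y0 + W y0)" for k
  proof -
    obtain ys where ys: "ys \<in> Xh" "W (x k) = v ys + Funk C (x k) ys" using W_att by blast
    have ysi: "ys \<in> interior C" using ys Xh_int by auto
    have "\<bar>Funk C ys x0 - v ys\<bar> \<le> E" unfolding E_def using ys Xh_fin by (intro member_le_sum) auto
    moreover have "Funk C (x k) x0 \<le> Funk C (x k) ys + Funk C ys x0" using Funk_tri[OF xi ysi x0] .
    moreover have "W (x k) \<le> W (y k) + Funk C (x k) (y k)" using W_lip[OF xi yi] .
    moreover have "Funk C (x k) (y k) \<le> Funk C x0 y0" unfolding x_def y_def using st_nonexp[OF sig tau x0 y0i] .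
    ultimately show ?thesis using ys Wy[of k] by linarith
  qed
  then have "limsup (\<lambda>k. ereal (Funk C (x k) x0 / real k)) \<le> ereal (lam + \<epsilon>)"
    by (intro limsup_upper[where d="E + Funk C x0 y0 + W y0"]) (simp add: algebra_simps)
  then show ?thesis unfolding escape_payoff_def x_def \<sigma>_def by simp
qed

lemma max_bound: assumes y0: "y0 \<in> Xh" and x0: "x0 \<in> interior C" and eps: "\<epsilon> > 0"
  and sig: "\<sigma> \<in> min_strategies A"
  shows "ereal (lam - h - \<epsilon>) \<le> escape_payoff C T x0 \<sigma> (tau_max y0 \<epsilon>)"
proof -
  define \<tau> where "\<tau> = tau_max y0 \<epsilon>"
  have tau: "\<tau> \<in> max_strategies B" using tau_max_strat[OF eps] \<tau>_def by simp
  have y0i: "y0 \<in> interior C" using y0 Xh_int by auto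
  have y0K: "y0 \<in> K" using y0 Xh_K by auto
  define y where "y k = game_state T y0 (game_hist \<sigma> \<tau> k)" for k
  define x where "x k = game_state T x0 (game_hist \<sigma> \<tau> k)" for k
  have yi: "y k \<in> interior C" for k unfolding y_def using st_int[OF sig tau y0i] .
  have yK: "y k \<in> K" for k unfolding y_def using st_K[OF sig tau y0K] .
  have xi: "x k \<in> interior C" for k unfolding x_def using st_int[OF sig tau x0] .
  have Wy: "W y0 + real k * (lam - h - \<epsilon>) \<le> W (y k)" for k
  proof (induction k)
    case 0 then show ?case by (simp add: y_def game_state_def)
  next
    case (Suc k)
    have "lam - h + W (y k) - \<epsilon> \<le> W (y (Suc k))"
      using tau_max_prop[OF eps, of y0 "game_hist \<sigma> \<tau> k" "\<sigma> (game_hist \<sigma> \<tau> k)"] yi[of k] yK[of k]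
        strat_in[OF sig tau]
      unfolding y_def hist_step \<tau>_def by blast
    then show ?case using Suc by (simp add: algebra_simps)
  qed
  have "real k * (lam - h - \<epsilon>) - (Funk C y0 x0 + W x0 - W y0) \<le> Funk C (x k) x0" for k
  proof -
    have "W (x k) \<le> W x0 + Funk C (x k) x0" using W_lip[OF xi x0] .
    moreover have "W (y k) \<le> W (x k) + Funk C (y k) (x k)" using W_lip[OF yi xi] .
    moreover have "Funk C (y k) (x k) \<le> Funk C y0 x0" unfolding x_def y_def using st_nonexp[OF sig tau y0i x0] .
    ultimately show ?thesis using Wy[of k] by linarith
  qed
  then have "ereal (lam - h - \<epsilon>) \<le> limsup (\<lambda>k. ereal (Funk C (x k) x0 / real k))"
    by (intro limsup_lower[where d="Funk C y0 x0 + W x0 - W y0"]) (simp add: algebra_simps)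
  then show ?thesis unfolding escape_payoff_def x_def \<tau>_def by simp
qed

end

theorem theorem5:
  fixes C :: "'a::euclidean_space set"
    and e :: 'a
    and A :: "'b::topological_space set"
    and B :: "'c::topological_space set"
    and T :: "'b \<Rightarrow> 'c \<Rightarrow> 'a \<Rightarrow> 'a"
    and K :: "'a set"
    and h :: real
    and Xh :: "'a set"
    and v :: "'a \<Rightarrow> real"
    and lam :: real
  assumes C_closed: "closed C" and C_convex: "convex C" and C_pointed: "pointed_cone C"
    and e_int: "e \<in> interior (dual_cone C)"
    and A_ne: "A \<noteq> {}" and A_compact: "compact A"
    and B_ne: "B \<noteq> {}" and B_compact: "compact B"
    and T_self: "\<And>a b x. a \<in> A \<Longrightarrow> b \<in> B \<Longrightarrow> x \<in> interior C \<Longrightarrow> T a b x \<in> interior C"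
    and T_nonexp: "\<And>a b x y. a \<in> A \<Longrightarrow> b \<in> B \<Longrightarrow> x \<in> interior C \<Longrightarrow> y \<in> interior C
                     \<Longrightarrow> Funk C (T a b x) (T a b y) \<le> Funk C x y"
    and T_cont_a: "\<And>b x. b \<in> B \<Longrightarrow> x \<in> interior C \<Longrightarrow> continuous_on A (\<lambda>a. T a b x)"
    and T_cont_b: "\<And>a x. a \<in> A \<Longrightarrow> x \<in> interior C \<Longrightarrow> continuous_on B (\<lambda>b. T a b x)"
    and T_compact: "\<And>K'. compact K' \<Longrightarrow> K' \<subseteq> interior C \<Longrightarrow>
                     compact {T a b x | a b x. a \<in> A \<and> b \<in> B \<and> x \<in> K'}"
    and T_ext: "\<And>a b. a \<in> A \<Longrightarrow> b \<in> B \<Longrightarrow> continuous_on C (T a b)"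
    and K_closed: "closed K" and K_cone: "cone K" and K_sub: "K \<subseteq> C"
    and K_inv: "\<And>a b. a \<in> A \<Longrightarrow> b \<in> B \<Longrightarrow> T a b ` K \<subseteq> K"
    and X_relint: "K \<inter> cross_section C e \<subseteq> rel_interior (cross_section C e)"
    and h_pos: "h > 0"
    and Xh_finite: "finite Xh" and Xh_ne: "Xh \<noteq> {}"
    and Xh_sub: "Xh \<subseteq> K \<inter> cross_section C e"
    and Xh_net: "K \<inter> cross_section C e \<subseteq> (\<Union>y\<in>Xh. {x. Hil C x y < h})"
    and v_lip: "v \<in> Lip1 C Xh"
    and fixpt: "\<And>x. x \<in> Xh \<Longrightarrow> ShapleyF A B T e (Iplus C Xh v) x = lam + v x"
  shows "\<forall>x0\<in>interior C. \<forall>\<rho>. is_escape_value C A B T x0 \<rho> \<longrightarrow> lam - h \<le> \<rho> \<and> \<rho> \<le> lam"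
proof (intro ballI allI impI)
  fix x0 \<rho> assume x0: "x0 \<in> interior C" and val: "is_escape_value C A B T x0 \<rho>"
  interpret F: funk_setting C e
    using C_convex C_pointed e_int by unfold_locales
  have Xh_int: "Xh \<subseteq> interior C" using Xh_sub X_relint F.relint_sub[OF x0] by blast
  interpret G: game_setting C e Xh v A B T K h lam
    using Xh_finite Xh_ne Xh_int A_ne B_ne T_self T_nonexp T_compact K_cone K_inv Xh_net Xh_sub fixpt
    by unfold_locales auto
  obtain y0 where y0: "y0 \<in> Xh" using Xh_ne by blast
  show "lam - h \<le> \<rho> \<and> \<rho> \<le> lam"
  proof
    show "\<rho> \<le> lam"
    proof (rule ccontr)
      assume "\<not> \<rho> \<le> lam"
      define \<delta> where "\<delta> = (\<rho> - lam) / 3"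
      have d: "\<delta> > 0" using \<open>\<not> \<rho> \<le> lam\<close> by (simp add: \<delta>_def)
      obtain \<tau>s where ts: "\<tau>s \<in> max_strategies B"
          "\<forall>\<sigma>\<in>min_strategies A. ereal (\<rho> - \<delta>) \<le> escape_payoff C T x0 \<sigma> \<tau>s"
        using val d unfolding is_escape_value_def by blast
      have "ereal (\<rho> - \<delta>) \<le> escape_payoff C T x0 (G.sig_min y0 \<delta>) \<tau>s"
        using ts(2) G.sig_min_strat[OF d] by blast
      also have "\<dots> \<le> ereal (lam + \<delta>)" using G.min_bound[OF y0 x0 d ts(1)] .
      finally have "\<rho> - \<delta> \<le> lam + \<delta>" by simp
      moreover have "3 * \<delta> = \<rho> - lam" by (simp add: \<delta>_def)
      ultimately show False using d by linarith
    qed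
  next
    show "lam - h \<le> \<rho>"
    proof (rule ccontr)
      assume "\<not> lam - h \<le> \<rho>"
      define \<delta> where "\<delta> = (lam - h - \<rho>) / 3"
      have d: "\<delta> > 0" using \<open>\<not> lam - h \<le> \<rho>\<close> by (simp add: \<delta>_def)
      obtain \<sigma>s where ss: "\<sigma>s \<in> min_strategies A"
          "\<forall>\<tau>\<in>max_strategies B. escape_payoff C T x0 \<sigma>s \<tau> \<le> ereal (\<rho> + \<delta>)"
        using val d unfolding is_escape_value_def by blast
      have "ereal (lam - h - \<delta>) \<le> escape_payoff C T x0 \<sigma>s (G.tau_max y0 \<delta>)"
        using G.max_bound[OF y0 x0 d ss(1)] .
      also have "\<dots> \<le> ereal (\<rho> + \<delta>)" using ss(2) G.tau_max_strat[OF d] by blast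
      finally have "lam - h - \<delta> \<le> \<rho> + \<delta>" by simp
      moreover have "3 * \<delta> = lam - h - \<rho>" by (simp add: \<delta>_def)
      ultimately show False using d by linarith
    qed
  qed
qed

end
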